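(* Let $G=\mathrm{GL}_n$ over $L$ with diagonal torus $T$ and upper triangular Borel $B$, and let $Q=M\ltimes N$, $Q'=M'\ltimes N'$ be standard parabolic subgroups. Let $\nu\in X_*(Z_{M'})$ be a $B$-dominant cocharacter and let $w\in{}^{Q'}W^{Q}$. Put $Q^M_{w^{-1}}=M\cap w^{-1}Q'w$, a standard parabolic subgroup of $M$ with Levi $M_{w^{-1}}$, and $Q^{M'}_w=M'\cap wQw^{-1}$ with Levi $M'_w$. Then $w^{-1}\nu\in X_*(Z_{M_{w^{-1}}})$ and it is $(B\cap M)$-dominant. In particular the isomorphism $M'_w(L)\to M_{w^{-1}}(L)$, $m\mapsto w^{-1}mw$, maps $Z_{M'}^+$ into $Z_{M_{w^{-1}}}^+$.
   Context: $L/\mathbf Q_p$ finite with ring of integers $\mathcal O_L$ and uniformiser $\varpi_L$. $W$ is the Weyl group of $(G,T)$, $W_Q$ the Weyl group of $M$, and ${}^{Q'}W^Q$ the set of minimal length representatives of $W_{Q'}\backslash W/W_Q$. For a parabolic $P=M_P\ltimes N_P$ (of $G$ or of a Levi subgroup, standard with respect to the relevant Borel), $Z_{M_P}^+=\{z\in Z_{M_P}(L): zN_P(\mathcal O_L)z^{-1}\subset N_P(\mathcal O_L),\ z^{-1}\overline N_P^1z\subset\overline N_P^1\}$, where $\overline N_P^1$ is the kernel of reduction mod $\varpi_L$ on the opposite unipotent radical; $Z_{M_{w^{-1}}}^+$ is taken with respect to the parabolic $Q^M_{w^{-1}}$ of $M$. *)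

theory Defs
  imports "Jordan_Normal_Form.Matrix" "HOL-Combinatorics.Permutations"
begin

text \<open>L is modelled as a field of characteristic 0 with a normalised discrete valuation
  v (v x meaningful for x \<noteq> 0), uniformiser pi (v pi = 1), complete, with finite residue field.
  These properties characterise the finite extensions of Q_p.\<close>

definition vball :: "('k::field \<Rightarrow> int) \<Rightarrow> int \<Rightarrow> 'k set" where
  "vball v N = {x. x = 0 \<or> N \<le> v x}"

abbreviation intring :: "('k::field \<Rightarrow> int) \<Rightarrow> 'k set" where
  "intring v \<equiv> vball v 0"

abbreviation maxideal :: "('k::field \<Rightarrow> int) \<Rightarrow> 'k set" where
  "maxideal v \<equiv> vball v 1"

definition padic_field :: "('k::field_char_0 \<Rightarrow> int) \<Rightarrow> 'k \<Rightarrow> bool" where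
  "padic_field v \<pi> \<longleftrightarrow>
     \<pi> \<noteq> 0 \<and> v \<pi> = 1 \<and>
     (\<forall>x y. x \<noteq> 0 \<and> y \<noteq> 0 \<longrightarrow> v (x * y) = v x + v y) \<and>
     (\<forall>x y. x \<noteq> 0 \<and> y \<noteq> 0 \<and> x + y \<noteq> 0 \<longrightarrow> min (v x) (v y) \<le> v (x + y)) \<and>
     (\<exists>F. finite F \<and> F \<subseteq> intring v \<and> (\<forall>x\<in>intring v. \<exists>a\<in>F. x - a \<in> maxideal v)) \<and>
     (\<forall>s::nat \<Rightarrow> 'k. (\<forall>N. \<exists>m0. \<forall>m\<ge>m0. \<forall>l\<ge>m0. s m - s l \<in> vball v N)
        \<longrightarrow> (\<exists>x. \<forall>N. \<exists>m0. \<forall>m\<ge>m0. x - s m \<in> vball v N))"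

text \<open>Indices 0..n-1. A standard parabolic is given by a set J \<subseteq> {i. i+1 < n} of simple roots
  e_i - e_(i+1) belonging to its Levi; i, j lie in the same Levi block iff all k between
  them are in J.\<close>

definition blk :: "nat set \<Rightarrow> nat \<Rightarrow> nat \<Rightarrow> bool" where
  "blk J i j \<longleftrightarrow> (\<forall>k. min i j \<le> k \<and> k < max i j \<longrightarrow> k \<in> J)"

definition GLn :: "nat \<Rightarrow> 'k::field mat set" where
  "GLn n = {A \<in> carrier_mat n n. invertible_mat A}"

definition pattern_grp :: "nat \<Rightarrow> (nat \<Rightarrow> nat \<Rightarrow> bool) \<Rightarrow> 'k::field mat set" where
  "pattern_grp n P = {A \<in> GLn n. \<forall>i<n. \<forall>j<n. \<not> P i j \<longrightarrow> A $$ (i,j) = 0}"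

text \<open>Q = M N (standard parabolic), M its standard Levi, N its unipotent radical,
  Nbar the opposite unipotent radical (L-points).\<close>

definition parQ :: "nat \<Rightarrow> nat set \<Rightarrow> 'k::field mat set" where
  "parQ n J = pattern_grp n (\<lambda>i j. i \<le> j \<or> blk J i j)"

definition levi :: "nat \<Rightarrow> nat set \<Rightarrow> 'k::field mat set" where
  "levi n J = pattern_grp n (blk J)"

definition unip :: "nat \<Rightarrow> nat set \<Rightarrow> 'k::field mat set" where
  "unip n J = {A \<in> GLn n. \<forall>i<n. A $$ (i,i) = 1 \<and>
      (\<forall>j<n. i \<noteq> j \<and> \<not> (i < j \<and> \<not> blk J i j) \<longrightarrow> A $$ (i,j) = 0)}"

definition ounip :: "nat \<Rightarrow> nat set \<Rightarrow> 'k::field mat set" where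
  "ounip n J = {A \<in> GLn n. \<forall>i<n. A $$ (i,i) = 1 \<and>
      (\<forall>j<n. i \<noteq> j \<and> \<not> (j < i \<and> \<not> blk J i j) \<longrightarrow> A $$ (i,j) = 0)}"

definition center_of :: "'k::field mat set \<Rightarrow> 'k mat set" where
  "center_of H = {z \<in> H. \<forall>h\<in>H. z * h = h * z}"

text \<open>W = permutations of {0..n-1}; w acts via the permutation matrix sending e_j to e_(w j).\<close>

definition weyl :: "nat \<Rightarrow> (nat \<Rightarrow> nat) set" where
  "weyl n = {w. w permutes {..<n}}"

definition weyl_levi :: "nat \<Rightarrow> nat set \<Rightarrow> (nat \<Rightarrow> nat) set" where
  "weyl_levi n J = {w \<in> weyl n. \<forall>i<n. blk J i (w i)}"

definition wlen :: "nat \<Rightarrow> (nat \<Rightarrow> nat) \<Rightarrow> nat" where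
  "wlen n w = (LEAST k. \<exists>ss. length ss = k \<and> (\<forall>i\<in>set ss. Suc i < n) \<and>
      w = foldr (\<lambda>i f. transpose i (Suc i) \<circ> f) ss id)"

definition minrep :: "nat \<Rightarrow> nat set \<Rightarrow> nat set \<Rightarrow> (nat \<Rightarrow> nat) \<Rightarrow> bool" where
  "minrep n J' J w \<longleftrightarrow> w \<in> weyl n \<and>
     (\<forall>u\<in>weyl_levi n J'. \<forall>y\<in>weyl_levi n J. wlen n w \<le> wlen n (u \<circ> w \<circ> y))"

definition perm_mat :: "nat \<Rightarrow> (nat \<Rightarrow> nat) \<Rightarrow> 'k::field mat" where
  "perm_mat n w = mat n n (\<lambda>(i,j). if i = w j then 1 else 0)"

definition conj :: "nat \<Rightarrow> (nat \<Rightarrow> nat) \<Rightarrow> 'k::field mat \<Rightarrow> 'k mat" where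
  "conj n w A = perm_mat n w * A * perm_mat n (inv_into UNIV w)"

text \<open>X_*(T) = Z^n: lambda(t) = diag(t^lambda_0, ..., t^lambda_(n-1)).\<close>

definition cochar_mat :: "nat \<Rightarrow> (nat \<Rightarrow> int) \<Rightarrow> 'k::field \<Rightarrow> 'k mat" where
  "cochar_mat n lam t = mat n n (\<lambda>(i,j). if i = j then t powi lam i else 0)"

text \<open>lambda lies in X_*(H) (H a subtorus, given by its L-points) iff lambda(t) \<in> H for all t.\<close>

definition cochar_in :: "nat \<Rightarrow> (nat \<Rightarrow> int) \<Rightarrow> 'k::field mat set \<Rightarrow> bool" where
  "cochar_in n lam H \<longleftrightarrow> (\<forall>t::'k. t \<noteq> 0 \<longrightarrow> cochar_mat n lam t \<in> H)"

text \<open>Weyl action: (w lambda)(t) = w lambda(t) w^{-1}, i.e. (w lambda)_(w i) = lambda_i.\<close>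

definition weyl_act :: "(nat \<Rightarrow> nat) \<Rightarrow> (nat \<Rightarrow> int) \<Rightarrow> (nat \<Rightarrow> int)" where
  "weyl_act w lam = lam \<circ> inv_into UNIV w"

definition B_dominant :: "nat \<Rightarrow> (nat \<Rightarrow> int) \<Rightarrow> bool" where
  "B_dominant n lam \<longleftrightarrow> (\<forall>i j. i < j \<and> j < n \<longrightarrow> lam j \<le> lam i)"

text \<open>(B \<inter> M)-dominance: nonnegative pairing with the positive roots e_i - e_j of M.\<close>

definition BM_dominant :: "nat \<Rightarrow> nat set \<Rightarrow> (nat \<Rightarrow> int) \<Rightarrow> bool" where
  "BM_dominant n J lam \<longleftrightarrow> (\<forall>i j. i < j \<and> j < n \<and> blk J i j \<longrightarrow> lam j \<le> lam i)"

definition integral_mats :: "nat \<Rightarrow> ('k::field \<Rightarrow> int) \<Rightarrow> 'k mat set" where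
  "integral_mats n v = {A. \<forall>i<n. \<forall>j<n. A $$ (i,j) \<in> intring v}"

definition level1_mats :: "nat \<Rightarrow> ('k::field \<Rightarrow> int) \<Rightarrow> 'k mat set" where
  "level1_mats n v = {A. \<forall>i<n. \<forall>j<n. A $$ (i,j) - (1\<^sub>m n) $$ (i,j) \<in> maxideal v}"

text \<open>Z^+ for a Levi with centre Z(L), unipotent radical Nu(L), opposite unipotent radical
  Nb(L): z Nu(O) z^{-1} \<subseteq> Nu(O) and z^{-1} Nb^1 z \<subseteq> Nb^1.\<close>

definition Zplus :: "nat \<Rightarrow> ('k::field \<Rightarrow> int) \<Rightarrow> 'k mat set \<Rightarrow> 'k mat set \<Rightarrow> 'k mat set \<Rightarrow> 'k mat set" where
  "Zplus n v Z Nu Nb = {z \<in> Z.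
     (\<forall>u \<in> Nu \<inter> integral_mats n v. \<exists>u' \<in> Nu \<inter> integral_mats n v. z * u = u' * z) \<and>
     (\<forall>u \<in> Nb \<inter> level1_mats n v. \<exists>u' \<in> Nb \<inter> level1_mats n v. u * z = z * u')}"

end

theory Submission
  imports Defs
begin


lemma mult_entry:
  assumes "A \<in> carrier_mat n m" "B \<in> carrier_mat m k" "i < n" "j < k"
  shows "(A * B) $$ (i,j) = (\<Sum>l<m. A $$ (i,l) * B $$ (l,j))"
  using assms by (auto simp: scalar_prod_def lessThan_atLeast0 intro!: sum.cong)

lemma perm_mat_carrier[simp]: "perm_mat n p \<in> carrier_mat n n"
  by (simp add: perm_mat_def)

lemma perm_mult_index:
  assumes p: "p permutes {..<n}" and A: "(A::'k::field mat) \<in> carrier_mat n m" and i: "i < n" and j: "j < m"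
  shows "(perm_mat n p * A) $$ (i,j) = A $$ (inv_into UNIV p i, j)"
proof -
  have ip: "inv_into UNIV p i < n" using p i by (meson lessThan_iff permutes_in_image permutes_inv)
  have "(perm_mat n p * A) $$ (i,j) = (\<Sum>l<n. (if l = inv_into UNIV p i then A $$ (l,j) else 0))"
    unfolding mult_entry[OF perm_mat_carrier A i j]
  proof (rule sum.cong[OF refl])
    fix l assume l: "l \<in> {..<n}"
    have "(i = p l) = (l = inv_into UNIV p i)"
      using permutes_inverses[OF p] by metis
    then show "perm_mat n p $$ (i, l) * A $$ (l, j) = (if l = inv_into UNIV p i then A $$ (l, j) else 0)"
      using l i by (simp add: perm_mat_def)
  qed
  also have "\<dots> = A $$ (inv_into UNIV p i, j)" using ip by simp
  finally show ?thesis .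
qed

lemma mult_perm_index:
  assumes p: "p permutes {..<n}" and A: "(A::'k::field mat) \<in> carrier_mat m n" and i: "i < m" and j: "j < n"
  shows "(A * perm_mat n p) $$ (i,j) = A $$ (i, p j)"
proof -
  have ip: "p j < n" using p j by (meson lessThan_iff permutes_in_image)
  have "(A * perm_mat n p) $$ (i,j) = (\<Sum>l<n. (if l = p j then A $$ (i,l) else 0))"
    unfolding mult_entry[OF A perm_mat_carrier i j]
    by (rule sum.cong) (auto simp: perm_mat_def j)
  also have "\<dots> = A $$ (i, p j)" using ip by simp
  finally show ?thesis .
qed

lemma conj_carrier[simp]: "A \<in> carrier_mat n n \<Longrightarrow> conj n p A \<in> carrier_mat n n"
  unfolding conj_def by (auto intro!: mult_carrier_mat)

lemma conj_index:
  assumes p: "p permutes {..<n}" and A: "(A::'k::field mat) \<in> carrier_mat n n" and i: "i < n" and j: "j < n"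
  shows "conj n p A $$ (i,j) = A $$ (inv_into UNIV p i, inv_into UNIV p j)"
proof -
  have pi: "inv_into UNIV p permutes {..<n}" using p by (rule permutes_inv)
  have ij: "inv_into UNIV p j < n" using pi j by (meson lessThan_iff permutes_in_image)
  have X: "perm_mat n p * A \<in> carrier_mat n n" using A by (auto intro!: mult_carrier_mat)
  show ?thesis unfolding conj_def
    by (rule trans[OF mult_perm_index[OF pi X i j] perm_mult_index[OF p A i ij]])
qed

lemma perm_inv_perm:
  assumes p: "p permutes {..<n}"
  shows "perm_mat n (inv_into UNIV p) * perm_mat n p = (1\<^sub>m n :: 'k::field mat)"
proof (rule eq_matI)
  have pi: "inv_into UNIV p permutes {..<n}" using p by (rule permutes_inv)
  fix i j assume i: "i < dim_row (1\<^sub>m n :: 'k mat)" and j: "j < dim_col (1\<^sub>m n :: 'k mat)"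
  then have i: "i < n" and j: "j < n" by auto
  have "(perm_mat n (inv_into UNIV p) * perm_mat n p) $$ (i,j) = (perm_mat n p :: 'k mat) $$ (inv_into UNIV (inv_into UNIV p) i, j)"
    by (rule perm_mult_index[OF pi perm_mat_carrier i j])
  also have "\<dots> = (perm_mat n p :: 'k mat) $$ (p i, j)" by (simp add: permutes_inv_inv[OF p])
  also have "\<dots> = (if p i = p j then 1 else 0)"
  proof -
    have "p i < n" using i p by (meson lessThan_iff permutes_in_image)
    then show ?thesis using j by (simp add: perm_mat_def)
  qed
  also have "\<dots> = (1\<^sub>m n :: 'k mat) $$ (i,j)"
    using i j p by (simp add: permutes_inj[OF p, THEN inj_eq])
  finally show "(perm_mat n (inv_into UNIV p) * perm_mat n p) $$ (i,j) = (1\<^sub>m n :: 'k mat) $$ (i,j)" .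
qed (auto simp: perm_mat_def)

lemma conj_mult:
  assumes p: "p permutes {..<n}" and A: "(A::'k::field mat) \<in> carrier_mat n n" and B: "B \<in> carrier_mat n n"
  shows "conj n p (A * B) = conj n p A * conj n p B"
proof -
  let ?P = "perm_mat n p :: 'k mat" and ?Q = "perm_mat n (inv_into UNIV p) :: 'k mat"
  have PC: "?P \<in> carrier_mat n n" "?Q \<in> carrier_mat n n" by simp_all
  have BQ: "B * ?Q \<in> carrier_mat n n" using B by (auto intro!: mult_carrier_mat)
  have PA: "?P * A \<in> carrier_mat n n" using A by (auto intro!: mult_carrier_mat)
  have PB: "?P * B \<in> carrier_mat n n" using B by (auto intro!: mult_carrier_mat)
  have PBQ: "?P * B * ?Q \<in> carrier_mat n n" using PB by (auto intro!: mult_carrier_mat)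
  have "?Q * (?P * B * ?Q) = ?Q * (?P * (B * ?Q))"
    using assoc_mult_mat[OF PC(1) B PC(2)] by simp
  also have "\<dots> = (?Q * ?P) * (B * ?Q)"
    using assoc_mult_mat[OF PC(2) PC(1) BQ] by simp
  also have "\<dots> = B * ?Q" using left_mult_one_mat[OF BQ] by (simp add: perm_inv_perm[OF p])
  finally have key: "?Q * (?P * B * ?Q) = B * ?Q" .
  have "conj n p A * conj n p B = (?P * A * ?Q) * (?P * B * ?Q)" by (simp only: conj_def)
  also have "\<dots> = ?P * A * (?Q * (?P * B * ?Q))" by (rule assoc_mult_mat[OF PA PC(2) PBQ])
  also have "\<dots> = ?P * A * (B * ?Q)" by (simp only: key)
  also have "\<dots> = ?P * A * B * ?Q" by (rule assoc_mult_mat[OF PA B PC(2), symmetric])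
  also have "\<dots> = ?P * (A * B) * ?Q" by (simp only: assoc_mult_mat[OF PC(1) A B])
  finally show ?thesis by (simp only: conj_def)
qed



definition isdiag :: "nat \<Rightarrow> 'k::field mat \<Rightarrow> bool" where
  "isdiag n Z \<longleftrightarrow> (\<forall>i<n. \<forall>j<n. i \<noteq> j \<longrightarrow> Z $$ (i,j) = 0)"

lemma diag_mult_left:
  assumes Z: "Z \<in> carrier_mat n n" and d: "isdiag n Z" and A: "(A::'k::field mat) \<in> carrier_mat n m"
    and i: "i < n" and j: "j < m"
  shows "(Z * A) $$ (i,j) = Z $$ (i,i) * A $$ (i,j)"
proof -
  have "(Z * A) $$ (i,j) = (\<Sum>l<n. (if l = i then Z $$ (i,i) * A $$ (i,j) else 0))"
    unfolding mult_entry[OF Z A i j]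
    by (rule sum.cong[OF refl]) (use d i in \<open>auto simp: isdiag_def\<close>)
  also have "\<dots> = Z $$ (i,i) * A $$ (i,j)" using i by simp
  finally show ?thesis .
qed

lemma diag_mult_right:
  assumes Z: "Z \<in> carrier_mat n n" and d: "isdiag n Z" and A: "(A::'k::field mat) \<in> carrier_mat m n"
    and i: "i < m" and j: "j < n"
  shows "(A * Z) $$ (i,j) = A $$ (i,j) * Z $$ (j,j)"
proof -
  have "(A * Z) $$ (i,j) = (\<Sum>l<n. (if l = j then A $$ (i,j) * Z $$ (j,j) else 0))"
    unfolding mult_entry[OF A Z i j]
    by (rule sum.cong[OF refl]) (use d j in \<open>auto simp: isdiag_def\<close>)
  also have "\<dots> = A $$ (i,j) * Z $$ (j,j)" using j by simp
  finally show ?thesis .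
qed

lemma inv_carrier:
  assumes A: "A \<in> carrier_mat n n" and "inverts_mat A B" "inverts_mat B A"
  shows "(B::'k::field mat) \<in> carrier_mat n n"
proof -
  have 1: "A * B = 1\<^sub>m n" using assms by (simp add: inverts_mat_def)
  have 2: "B * A = 1\<^sub>m (dim_row B)" using assms by (simp add: inverts_mat_def)
  have "dim_col B = n" using arg_cong[OF 1, of dim_col] by simp
  moreover have "dim_row B = n" using arg_cong[OF 2, of dim_col] A by simp
  ultimately show ?thesis by auto
qed

lemma diag_inv_nonzero:
  assumes Z: "Z \<in> carrier_mat n n" and d: "isdiag n Z" and inv: "invertible_mat (Z::'k::field mat)" and i: "i < n"
  shows "Z $$ (i,i) \<noteq> 0"
proof -
  obtain B where B: "inverts_mat Z B" "inverts_mat B Z" using inv by (auto simp: invertible_mat_def)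
  have BC: "B \<in> carrier_mat n n" by (rule inv_carrier[OF Z B])
  have "Z * B = 1\<^sub>m n" using B Z by (simp add: inverts_mat_def)
  then have "(Z * B) $$ (i,i) = 1" using i by simp
  then have "Z $$ (i,i) * B $$ (i,i) = 1" using diag_mult_left[OF Z d BC i i] by simp
  then show ?thesis by auto
qed

lemma conj_one:
  assumes p: "p permutes {..<n}"
  shows "conj n p (1\<^sub>m n) = (1\<^sub>m n :: 'k::field mat)"
proof (rule eq_matI)
  fix i j assume "i < dim_row (1\<^sub>m n :: 'k mat)" "j < dim_col (1\<^sub>m n :: 'k mat)"
  then have i: "i < n" and j: "j < n" by auto
  have pi: "inv_into UNIV p permutes {..<n}" using p by (rule permutes_inv)
  have "inv_into UNIV p i < n" "inv_into UNIV p j < n" using pi i j by (meson lessThan_iff permutes_in_image)+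
  moreover have "(inv_into UNIV p i = inv_into UNIV p j) = (i = j)"
    using permutes_inj[OF pi] by (simp add: inj_eq)
  ultimately show "conj n p (1\<^sub>m n) $$ (i,j) = (1\<^sub>m n :: 'k mat) $$ (i,j)"
    unfolding conj_index[OF p one_carrier_mat i j] using i j by simp
qed (auto simp: conj_def perm_mat_def)

lemma conj_GLn:
  assumes p: "p permutes {..<n}" and A: "A \<in> GLn n"
  shows "conj n p (A::'k::field mat) \<in> GLn n"
proof -
  have AC: "A \<in> carrier_mat n n" using A by (simp add: GLn_def)
  obtain B where B: "inverts_mat A B" "inverts_mat B A" using A by (auto simp: GLn_def invertible_mat_def)
  have BC: "B \<in> carrier_mat n n" by (rule inv_carrier[OF AC B])
  have AB: "A * B = 1\<^sub>m n" "B * A = 1\<^sub>m n" using B AC BC by (auto simp: inverts_mat_def)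
  have "conj n p A * conj n p B = conj n p (A * B)" by (rule conj_mult[OF p AC BC, symmetric])
  also have "\<dots> = 1\<^sub>m n" by (simp only: AB conj_one[OF p])
  finally have 1: "conj n p A * conj n p B = 1\<^sub>m n" .
  have "conj n p B * conj n p A = conj n p (B * A)" by (rule conj_mult[OF p BC AC, symmetric])
  also have "\<dots> = 1\<^sub>m n" by (simp only: AB conj_one[OF p])
  finally have 2: "conj n p B * conj n p A = 1\<^sub>m n" .
  have CA: "conj n p A \<in> carrier_mat n n" and CB: "conj n p B \<in> carrier_mat n n" using AC BC by simp_all
  show ?thesis using 1 2 AC BC
    by (auto simp: carrier_matD[OF CA] carrier_matD[OF CB] GLn_def invertible_mat_def inverts_mat_def square_mat.simps intro!: exI[of _ "conj n p B"])
qed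

lemma center_diag:
  assumes z: "z \<in> center_of (levi n J :: 'k::field_char_0 mat set)"
  shows "z \<in> carrier_mat n n" "isdiag n z"
proof -
  have zl: "z \<in> levi n J" and zc: "\<forall>h\<in>levi n J. z * h = h * z" using z by (auto simp: center_of_def)
  show zC: "z \<in> carrier_mat n n" using zl by (simp add: levi_def pattern_grp_def GLn_def)
  define D :: "'k mat" where "D = mat n n (\<lambda>(i,j). if i = j then of_nat (Suc i) else 0)"
  define E :: "'k mat" where "E = mat n n (\<lambda>(i,j). if i = j then 1 / of_nat (Suc i) else 0)"
  have nz: "(1 + of_nat j :: 'k) \<noteq> 0" for j
  proof -
    have "(of_nat (Suc j)::'k) \<noteq> 0" using of_nat_eq_0_iff by blast
    then show ?thesis by simp
  qed
  have DC: "D \<in> carrier_mat n n" and EC: "E \<in> carrier_mat n n" by (simp_all add: D_def E_def)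
  have Dd: "isdiag n D" and Ed: "isdiag n E" by (simp_all add: D_def E_def isdiag_def)
  have DE: "D * E = 1\<^sub>m n"
  proof (rule eq_matI)
    fix i j assume "i < dim_row (1\<^sub>m n :: 'k mat)" "j < dim_col (1\<^sub>m n :: 'k mat)"
    then have i: "i < n" and j: "j < n" by auto
    show "(D * E) $$ (i,j) = (1\<^sub>m n :: 'k mat) $$ (i,j)"
      unfolding diag_mult_left[OF DC Dd EC i j] using i j nz by (simp add: D_def E_def)
  qed (simp_all add: D_def E_def)
  have ED: "E * D = 1\<^sub>m n"
  proof (rule eq_matI)
    fix i j assume "i < dim_row (1\<^sub>m n :: 'k mat)" "j < dim_col (1\<^sub>m n :: 'k mat)"
    then have i: "i < n" and j: "j < n" by auto
    show "(E * D) $$ (i,j) = (1\<^sub>m n :: 'k mat) $$ (i,j)"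
      unfolding diag_mult_left[OF EC Ed DC i j] using i j nz by (simp add: D_def E_def)
  qed (simp_all add: D_def E_def)
  have "D \<in> levi n J"
    unfolding levi_def pattern_grp_def GLn_def
    using DC DE ED by (auto simp: carrier_matD[OF EC] invertible_mat_def inverts_mat_def square_mat.simps blk_def D_def intro!: exI[of _ E])
  then have zD: "z * D = D * z" using zc by blast
  show "isdiag n z" unfolding isdiag_def
  proof (intro allI impI)
    fix i j assume i: "i < n" and j: "j < n" and ij: "i \<noteq> j"
    have "z $$ (i,j) * of_nat (Suc j) = of_nat (Suc i) * z $$ (i,j)"
      using arg_cong[OF zD, of "\<lambda>M. M $$ (i,j)"] diag_mult_right[OF DC Dd zC i j] diag_mult_left[OF DC Dd zC i j]
      i j by (simp add: D_def)
    then have "z $$ (i,j) * (of_nat (Suc j) - of_nat (Suc i)) = 0" by (simp add: algebra_simps)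
    moreover have "(of_nat (Suc j) - of_nat (Suc i) :: 'k) \<noteq> 0" using ij by simp
    ultimately show "z $$ (i,j) = 0" by simp
  qed
qed



definition word :: "nat list \<Rightarrow> nat \<Rightarrow> nat" where
  "word ss = foldr (\<lambda>i f. transpose i (Suc i) \<circ> f) ss id"

lemma foldr_comp: "foldr (\<lambda>i f. transpose i (Suc i) \<circ> f) ss h = word ss \<circ> h"
  by (induction ss) (auto simp: word_def)

lemma word_snoc: "word (xs @ [k]) = word xs \<circ> transpose k (Suc k)"
proof -
  have "word (xs @ [k]) = foldr (\<lambda>i f. transpose i (Suc i) \<circ> f) xs (transpose k (Suc k))"
    by (simp add: word_def)
  also have "\<dots> = word xs \<circ> transpose k (Suc k)" by (rule foldr_comp)
  finally show ?thesis .
qed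

definition invs :: "nat \<Rightarrow> (nat \<Rightarrow> nat) \<Rightarrow> (nat \<times> nat) set" where
  "invs n f = {(i,j). i < j \<and> j < n \<and> f j < f i}"

lemma invs_finite[simp]: "finite (invs n f)"
  by (rule finite_subset[of _ "{..<n} \<times> {..<n}"]) (auto simp: invs_def)

lemma swap_mono:
  assumes "i < j" "(i,j) \<noteq> (k, Suc k)"
  shows "transpose k (Suc k) i < transpose k (Suc k) j"
  using assms unfolding transpose_def by auto

lemma swap_lt: "Suc k < n \<Longrightarrow> (transpose k (Suc k) j < n) = (j < n)"
  unfolding transpose_def by auto

lemma swap_swap[simp]: "transpose k (Suc k) (transpose k (Suc k) j) = j"
  by simp

lemma swap_pair_ne: "(i,j) \<noteq> (k, Suc k) \<Longrightarrow> i < j \<Longrightarrow>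
   (transpose k (Suc k) i, transpose k (Suc k) j) \<noteq> (k, Suc k)"
  unfolding transpose_def by auto

lemma invs_swap_sub:
  assumes k: "Suc k < n"
  shows "(\<lambda>(i,j). (transpose k (Suc k) i, transpose k (Suc k) j)) ` (invs n (f \<circ> transpose k (Suc k)) - {(k, Suc k)}) \<subseteq> invs n f - {(k, Suc k)}"
proof
  fix x assume "x \<in> (\<lambda>(i,j). (transpose k (Suc k) i, transpose k (Suc k) j)) ` (invs n (f \<circ> transpose k (Suc k)) - {(k, Suc k)})"
  then obtain i j where x: "x = (transpose k (Suc k) i, transpose k (Suc k) j)"
    and ij: "i < j" "j < n" "f (transpose k (Suc k) j) < f (transpose k (Suc k) i)" "(i,j) \<noteq> (k, Suc k)"
    by (auto simp: invs_def)
  show "x \<in> invs n f - {(k, Suc k)}"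
    unfolding x invs_def using swap_mono[OF ij(1,4)] swap_lt[OF k, of j] ij swap_pair_ne[OF ij(4,1)] by simp
qed

lemma invs_swap_bij:
  assumes k: "Suc k < n"
  shows "bij_betw (\<lambda>(i,j). (transpose k (Suc k) i, transpose k (Suc k) j))
           (invs n (f \<circ> transpose k (Suc k)) - {(k, Suc k)}) (invs n f - {(k, Suc k)})"
proof (rule bij_betw_byWitness[where f' = "\<lambda>(i,j). (transpose k (Suc k) i, transpose k (Suc k) j)"])
  show "\<forall>a\<in>invs n (f \<circ> transpose k (Suc k)) - {(k, Suc k)}.
     (\<lambda>(i,j). (transpose k (Suc k) i, transpose k (Suc k) j)) ((\<lambda>(i,j). (transpose k (Suc k) i, transpose k (Suc k) j)) a) = a"
    by auto
  show "\<forall>a\<in>invs n f - {(k, Suc k)}.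
     (\<lambda>(i,j). (transpose k (Suc k) i, transpose k (Suc k) j)) ((\<lambda>(i,j). (transpose k (Suc k) i, transpose k (Suc k) j)) a) = a"
    by auto
  show "(\<lambda>(i,j). (transpose k (Suc k) i, transpose k (Suc k) j)) ` (invs n (f \<circ> transpose k (Suc k)) - {(k, Suc k)}) \<subseteq> invs n f - {(k, Suc k)}"
    by (rule invs_swap_sub[OF k])
  show "(\<lambda>(i,j). (transpose k (Suc k) i, transpose k (Suc k) j)) ` (invs n f - {(k, Suc k)}) \<subseteq> invs n (f \<circ> transpose k (Suc k)) - {(k, Suc k)}"
    using invs_swap_sub[OF k, of "f \<circ> transpose k (Suc k)"] by (simp add: comp_assoc)
qed

lemma invs_swap_card:
  assumes k: "Suc k < n"
  shows "card (invs n (f \<circ> transpose k (Suc k)) - {(k, Suc k)}) = card (invs n f - {(k, Suc k)})"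
  using bij_betw_same_card[OF invs_swap_bij[OF k]] .

lemma invs_swap_le:
  assumes k: "Suc k < n"
  shows "card (invs n (f \<circ> transpose k (Suc k))) \<le> card (invs n f) + 1"
proof -
  have "card (invs n (f \<circ> transpose k (Suc k))) \<le> card (invs n (f \<circ> transpose k (Suc k)) - {(k, Suc k)}) + 1"
    by (cases "(k, Suc k) \<in> invs n (f \<circ> transpose k (Suc k))") (simp_all add: card_Diff_singleton)
  also have "\<dots> = card (invs n f - {(k, Suc k)}) + 1" using invs_swap_card[OF k] by simp
  also have "\<dots> \<le> card (invs n f) + 1" by (simp add: card_Diff1_le)
  finally show ?thesis .
qed

lemma invs_swap_desc:
  assumes k: "Suc k < n" and d: "f (Suc k) < f k"
  shows "card (invs n (f \<circ> transpose k (Suc k))) + 1 = card (invs n f)"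
proof -
  have "(k, Suc k) \<in> invs n f" using k d by (auto simp: invs_def)
  moreover have "(k, Suc k) \<notin> invs n (f \<circ> transpose k (Suc k))" using d by (auto simp: invs_def)
  ultimately show ?thesis using invs_swap_card[OF k, of f] card_Suc_Diff1[OF invs_finite, of "(k, Suc k)" n f]
    by simp
qed

lemma word_lower:
  "(\<forall>i\<in>set ss. Suc i < n) \<Longrightarrow> card (invs n (word ss)) \<le> length ss"
proof (induction ss rule: rev_induct)
  case Nil
  have "invs n (word []) = {}" by (auto simp: word_def invs_def)
  then show ?case by simp
next
  case (snoc k xs)
  then have k: "Suc k < n" and IH: "card (invs n (word xs)) \<le> length xs" by auto
  show ?case unfolding word_snoc using invs_swap_le[OF k, of "word xs"] IH
    by (simp only: length_append_singleton)
qed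

lemma chain_less:
  assumes "\<forall>k. i \<le> k \<and> k < j \<longrightarrow> (f::nat\<Rightarrow>nat) k < f (Suc k)" "i < j"
  shows "f i < f j"
  using assms
proof (induction j)
  case 0 then show ?case by simp
next
  case (Suc j)
  show ?case
  proof (cases "i = j")
    case True then show ?thesis using Suc.prems by auto
  next
    case False
    then have "f i < f j" using Suc by auto
    also have "f j < f (Suc j)" using Suc.prems False by auto
    finally show ?thesis .
  qed
qed

lemma no_desc_id:
  assumes p: "f permutes {..<n}" and nd: "\<forall>k. Suc k < n \<longrightarrow> f k < f (Suc k)"
  shows "f = id"
proof -
  have lt: "f i < n" if "i < n" for i using p that by (meson lessThan_iff permutes_in_image)
  have ge: "i \<le> f i" if "i < n" for i using that
  proof (induction i)
    case 0 then show ?case by simp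
  next
    case (Suc i)
    then have "i \<le> f i" "f i < f (Suc i)" using nd by auto
    then show ?case by simp
  qed
  have le: "f (n - Suc d) \<le> n - Suc d" if "d < n" for d using that
  proof (induction d)
    case 0 then show ?case using lt[of "n - 1"] by simp
  next
    case (Suc d)
    then have "f (n - Suc (Suc d)) < f (Suc (n - Suc (Suc d)))" using nd by simp
    moreover have "Suc (n - Suc (Suc d)) = n - Suc d" using Suc.prems by simp
    ultimately show ?case using Suc by simp
  qed
  have "f i = i" for i
  proof (cases "i < n")
    case True
    have "f (n - Suc (n - Suc i)) \<le> n - Suc (n - Suc i)" using le[of "n - Suc i"] True by simp
    moreover have "n - Suc (n - Suc i) = i" using True by simp
    ultimately show ?thesis using ge[OF True] by simp
  next
    case False then show ?thesis using p by (simp add: permutes_not_in)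
  qed
  then show ?thesis by auto
qed

lemma word_upper:
  "f permutes {..<n} \<Longrightarrow> \<exists>ss. length ss = card (invs n f) \<and> (\<forall>i\<in>set ss. Suc i < n) \<and> f = word ss"
proof (induction "card (invs n f)" arbitrary: f)
  case 0
  then have e: "invs n f = {}" by simp
  have "f k < f (Suc k)" if k: "Suc k < n" for k
  proof (rule ccontr)
    assume "\<not> f k < f (Suc k)"
    moreover have "f k \<noteq> f (Suc k)" using permutes_inj[OF 0(2)] by (metis injD n_not_Suc_n)
    ultimately have "(k, Suc k) \<in> invs n f" using k by (auto simp: invs_def)
    then show False using e by simp
  qed
  then have "f = id" using no_desc_id[OF 0(2)] by blast
  then show ?case using 0 by (auto simp: word_def)
next
  case (Suc m)
  have "invs n f \<noteq> {}" using Suc.hyps(2) by (metis card.empty nat.distinct(1))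
  then obtain i j where ij: "i < j" "j < n" "f j < f i"
    unfolding invs_def by blast
  have "\<exists>k. i \<le> k \<and> k < j \<and> \<not> f k < f (Suc k)"
  proof (rule ccontr)
    assume "\<not> ?thesis"
    then have "f i < f j" using chain_less[of i j f] ij(1) by blast
    then show False using ij by simp
  qed
  then obtain k where k: "i \<le> k" "k < j" "\<not> f k < f (Suc k)" by blast
  have kn: "Suc k < n" using k ij by simp
  have "f k \<noteq> f (Suc k)" using permutes_inj[OF Suc.prems] by (metis injD n_not_Suc_n)
  then have fk: "f (Suc k) < f k" using k(3) by simp
  let ?g = "f \<circ> transpose k (Suc k)"
  have gp: "?g permutes {..<n}"
    by (rule permutes_compose[OF _ Suc.prems]) (rule permutes_swap_id, use kn in auto)
  have cg: "card (invs n ?g) = m" using invs_swap_desc[OF kn fk] Suc.hyps(2) by simp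
  obtain ss where ss: "length ss = m" "\<forall>i\<in>set ss. Suc i < n" "?g = word ss"
    using Suc.hyps(1)[OF cg[symmetric] gp] unfolding cg by blast
  have "word (ss @ [k]) = ?g \<circ> transpose k (Suc k)"
    unfolding word_snoc ss(3) ..
  also have "\<dots> = f" by (simp add: fun_eq_iff)
  finally have w: "word (ss @ [k]) = f" .
  show ?case
  proof (intro exI[of _ "ss @ [k]"] conjI)
    show "length (ss @ [k]) = card (invs n f)" using ss(1) Suc.hyps(2) by simp
    show "\<forall>i\<in>set (ss @ [k]). Suc i < n" using ss(2) kn by simp
    show "f = word (ss @ [k])" using w by simp
  qed
qed

lemma wlen_eq:
  assumes p: "f permutes {..<n}"
  shows "wlen n f = card (invs n f)"
  unfolding wlen_def
proof (rule Least_equality)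
  show "\<exists>ss. length ss = card (invs n f) \<and> (\<forall>i\<in>set ss. Suc i < n) \<and> f = foldr (\<lambda>i f. transpose i (Suc i) \<circ> f) ss id"
    using word_upper[OF p] unfolding word_def .
  fix y assume "\<exists>ss. length ss = y \<and> (\<forall>i\<in>set ss. Suc i < n) \<and> f = foldr (\<lambda>i f. transpose i (Suc i) \<circ> f) ss id"
  then obtain ss where ss: "length ss = y" "\<forall>i\<in>set ss. Suc i < n" "f = foldr (\<lambda>i f. transpose i (Suc i) \<circ> f) ss id"
    by blast
  have "f = word ss" using ss(3) by (simp only: word_def)
  then show "card (invs n f) \<le> y" using word_lower[OF ss(2)] ss(1) by simp
qed



lemma levi_GLn: "A \<in> levi n J \<Longrightarrow> A \<in> GLn n"
  by (simp add: levi_def pattern_grp_def)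

lemma GLn_carrier: "A \<in> GLn n \<Longrightarrow> A \<in> carrier_mat n n"
  by (simp add: GLn_def)

lemma blk_refl[simp]: "blk J i i"
  by (auto simp: blk_def)

lemma diag_levi:
  assumes "A \<in> GLn n" "isdiag n A"
  shows "A \<in> levi n J"
proof -
  have "\<forall>i<n. \<forall>j<n. \<not> blk J i j \<longrightarrow> A $$ (i,j) = 0" using assms(2) blk_refl unfolding isdiag_def by metis
  then show ?thesis using assms(1) by (simp add: levi_def pattern_grp_def)
qed

lemma conj_diag:
  assumes p: "p permutes {..<n}" and A: "A \<in> carrier_mat n n" and d: "isdiag n (A::'k::field mat)"
  shows "isdiag n (conj n p A)"
  unfolding isdiag_def
proof (intro allI impI)
  fix i j assume i: "i < n" and j: "j < n" and ij: "i \<noteq> j"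
  have pi: "inv_into UNIV p permutes {..<n}" using p by (rule permutes_inv)
  have "inv_into UNIV p i < n" "inv_into UNIV p j < n" using pi i j by (meson lessThan_iff permutes_in_image)+
  moreover have "inv_into UNIV p i \<noteq> inv_into UNIV p j"
    using permutes_inj[OF pi] ij by (simp add: inj_eq)
  ultimately show "conj n p A $$ (i,j) = 0"
    unfolding conj_index[OF p A i j] using d by (simp add: isdiag_def)
qed

lemma conj_comm:
  assumes p: "p permutes {..<n}" and X: "X \<in> center_of (levi n J' :: 'k::field mat set)"
    and h: "h \<in> conj n p ` levi n J'"
  shows "conj n p X * h = h * conj n p X"
proof -
  obtain h' where h': "h' \<in> levi n J'" "h = conj n p h'" using h by auto
  have XC: "X \<in> carrier_mat n n" using X by (auto simp: center_of_def dest!: levi_GLn GLn_carrier)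
  have hC: "h' \<in> carrier_mat n n" using h' levi_GLn GLn_carrier by blast
  have "X * h' = h' * X" using X h' by (auto simp: center_of_def)
  then show ?thesis unfolding h'(2) conj_mult[OF p XC hC, symmetric] conj_mult[OF p hC XC, symmetric] by simp
qed

lemma minrep_asc:
  assumes w: "minrep n J' J w" and k: "k \<in> J" and J: "J \<subseteq> {i. Suc i < n}"
  shows "w k < w (Suc k)"
proof (rule ccontr)
  assume a: "\<not> w k < w (Suc k)"
  have wp: "w permutes {..<n}" using w by (simp add: minrep_def weyl_def)
  have kn: "Suc k < n" using k J by auto
  have "w k \<noteq> w (Suc k)" using permutes_inj[OF wp] by (metis injD n_not_Suc_n)
  then have d: "w (Suc k) < w k" using a by simp
  have sp: "transpose k (Suc k) permutes {..<n}" by (rule permutes_swap_id) (use kn in auto)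
  have idl: "id \<in> weyl_levi n J'" by (simp add: weyl_levi_def weyl_def permutes_id)
  have "blk J i (transpose k (Suc k) i)" for i
  proof (cases "i = k \<or> i = Suc k")
    case True then show ?thesis using k by (auto simp: blk_def transpose_def less_Suc_eq_le dest: le_antisym)
  next
    case False then show ?thesis by (simp add: transpose_def)
  qed
  then have sl: "transpose k (Suc k) \<in> weyl_levi n J" using sp by (simp add: weyl_levi_def weyl_def)
  have "wlen n w \<le> wlen n (id \<circ> w \<circ> transpose k (Suc k))"
    using w idl sl unfolding minrep_def by blast
  moreover have "wlen n (id \<circ> w \<circ> transpose k (Suc k)) = card (invs n (w \<circ> transpose k (Suc k)))"
    using wlen_eq[OF permutes_compose[OF sp wp]] by simp
  moreover have "wlen n w = card (invs n w)" by (rule wlen_eq[OF wp])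
  ultimately show False using invs_swap_desc[OF kn d] by simp
qed

theorem lemma4p17:
  fixes n :: nat and J J' :: "nat set" and w :: "nat \<Rightarrow> nat" and \<nu> :: "nat \<Rightarrow> int"
    and v :: "'k::field_char_0 \<Rightarrow> int" and \<pi> :: 'k
  assumes L: "padic_field v \<pi>"
    and J: "J \<subseteq> {i. Suc i < n}" and J': "J' \<subseteq> {i. Suc i < n}"
    and nu_cent: "cochar_in n \<nu> (center_of (levi n J' :: 'k mat set))"
    and nu_dom: "B_dominant n \<nu>"
    and w: "minrep n J' J w"
  shows "cochar_in n (weyl_act (inv_into UNIV w) \<nu>)
           (center_of (levi n J \<inter> conj n (inv_into UNIV w) ` levi n J' :: 'k mat set))
       \<and> BM_dominant n J (weyl_act (inv_into UNIV w) \<nu>)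
       \<and> conj n (inv_into UNIV w) ` Zplus n v (center_of (levi n J')) (unip n J') (ounip n J')
           \<subseteq> Zplus n v (center_of (levi n J \<inter> conj n (inv_into UNIV w) ` levi n J'))
                (levi n J \<inter> conj n (inv_into UNIV w) ` unip n J')
                (levi n J \<inter> conj n (inv_into UNIV w) ` ounip n J')"
proof -
  let ?u = "inv_into UNIV w"
  have wp: "w permutes {..<n}" using w by (simp add: minrep_def weyl_def)
  have up: "?u permutes {..<n}" using wp by (rule permutes_inv)
  have iu: "inv_into UNIV ?u = w" by (rule permutes_inv_inv[OF wp])
  have wn: "w i < n" if "i < n" for i using wp that by (meson lessThan_iff permutes_in_image)
  have un: "?u i < n" if "i < n" for i using up that by (meson lessThan_iff permutes_in_image)
  have wu: "w (?u i) = i" for i using permutes_inverses(1)[OF wp] .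
  have winj: "(w i = w j) = (i = j)" for i j using permutes_inj[OF wp] by (simp add: inj_eq)
  have uinj: "(?u i = ?u j) = (i = j)" for i j using permutes_inj[OF up] by (simp add: inj_eq)
  have ci: "conj n ?u A $$ (i,j) = A $$ (w i, w j)" if "A \<in> carrier_mat n n" "i < n" "j < n" for A :: "'k mat" and i j
    using conj_index[OF up that] iu by simp
  have wa: "weyl_act ?u \<nu> = \<nu> \<circ> w" by (simp add: weyl_act_def iu)
  let ?H = "levi n J \<inter> conj n ?u ` levi n J' :: 'k mat set"
  have cent: "conj n ?u X \<in> center_of ?H" if X: "X \<in> center_of (levi n J' :: 'k mat set)" for X
  proof -
    have Xl: "X \<in> levi n J'" using X by (simp add: center_of_def)
    have XG: "X \<in> GLn n" by (rule levi_GLn[OF Xl])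
    have XC: "X \<in> carrier_mat n n" by (rule GLn_carrier[OF XG])
    have Xd: "isdiag n X" by (rule center_diag(2)[OF X])
    have "conj n ?u X \<in> levi n J"
      by (rule diag_levi[OF conj_GLn[OF up XG] conj_diag[OF up XC Xd]])
    moreover have "conj n ?u X \<in> conj n ?u ` levi n J'" using Xl by blast
    moreover have "\<forall>h\<in>?H. conj n ?u X * h = h * conj n ?u X"
      using conj_comm[OF up X] by blast
    ultimately show ?thesis by (simp add: center_of_def)
  qed
  have P1: "cochar_in n (weyl_act ?u \<nu>) (center_of ?H)"
    unfolding cochar_in_def
  proof (intro allI impI)
    fix t :: 'k assume t: "t \<noteq> 0"
    have D: "cochar_mat n \<nu> t \<in> center_of (levi n J' :: 'k mat set)" using nu_cent t by (simp add: cochar_in_def)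
    have DC: "cochar_mat n \<nu> t \<in> carrier_mat n n" by (simp add: cochar_mat_def)
    have "cochar_mat n (weyl_act ?u \<nu>) t = conj n ?u (cochar_mat n \<nu> t)"
    proof (rule eq_matI)
      fix i j assume "i < dim_row (conj n ?u (cochar_mat n \<nu> t))" "j < dim_col (conj n ?u (cochar_mat n \<nu> t))"
      then have i: "i < n" and j: "j < n" using carrier_matD[OF conj_carrier[OF DC, where p = "?u"]] by auto
      show "cochar_mat n (weyl_act ?u \<nu>) t $$ (i,j) = conj n ?u (cochar_mat n \<nu> t) $$ (i,j)"
        unfolding ci[OF DC i j] using i j wn[OF i] wn[OF j] by (simp add: cochar_mat_def wa winj)
    qed (use carrier_matD[OF conj_carrier[OF DC, where p = "?u"]] in \<open>auto simp: cochar_mat_def\<close>)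
    then show "cochar_mat n (weyl_act ?u \<nu>) t \<in> center_of ?H" using cent[OF D] by simp
  qed
  have P2: "BM_dominant n J (weyl_act ?u \<nu>)"
    unfolding BM_dominant_def wa
  proof (intro allI impI, elim conjE)
    fix i j assume ij: "i < j" "j < n" "blk J i j"
    have "\<forall>k. i \<le> k \<and> k < j \<longrightarrow> w k < w (Suc k)"
      using ij minrep_asc[OF w _ J] unfolding blk_def by auto
    then have "w i < w j" using chain_less ij(1) by blast
    then show "(\<nu> \<circ> w) j \<le> (\<nu> \<circ> w) i" using nu_dom wn[OF ij(2)] by (simp add: B_dominant_def)
  qed
  have P3: "conj n ?u z \<in> Zplus n v (center_of ?H) (levi n J \<inter> conj n ?u ` unip n J') (levi n J \<inter> conj n ?u ` ounip n J')"
    if z: "z \<in> Zplus n v (center_of (levi n J')) (unip n J') (ounip n J')" for z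
  proof -
    have zc: "z \<in> center_of (levi n J' :: 'k mat set)" using z by (simp add: Zplus_def)
    have zl: "z \<in> levi n J'" using zc by (simp add: center_of_def)
    have zG: "z \<in> GLn n" by (rule levi_GLn[OF zl])
    have zC: "z \<in> carrier_mat n n" by (rule GLn_carrier[OF zG])
    have zd: "isdiag n z" by (rule center_diag(2)[OF zc])
    let ?Z = "conj n ?u z"
    have ZC: "?Z \<in> carrier_mat n n" using zC by simp
    have ZG: "?Z \<in> GLn n" by (rule conj_GLn[OF up zG])
    have Zd: "isdiag n ?Z" by (rule conj_diag[OF up zC zd])
    have Znz: "?Z $$ (i,i) \<noteq> 0" if "i < n" for i
      using diag_inv_nonzero[OF ZC Zd _ that] ZG by (simp add: GLn_def)
    have Zcent: "?Z \<in> center_of ?H" by (rule cent[OF zc])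
    have A1: "\<exists>x'\<in>(levi n J \<inter> conj n ?u ` unip n J') \<inter> integral_mats n v. ?Z * x = x' * ?Z"
      if x: "x \<in> (levi n J \<inter> conj n ?u ` unip n J') \<inter> integral_mats n v" for x
    proof -
      obtain n1 where n1: "n1 \<in> unip n J'" "x = conj n ?u n1" using x by auto
      have n1G: "n1 \<in> GLn n" using n1 by (simp add: unip_def)
      have n1C: "n1 \<in> carrier_mat n n" by (rule GLn_carrier[OF n1G])
      have "n1 $$ (a,b) \<in> intring v" if "a < n" "b < n" for a b
      proof -
        have "x $$ (?u a, ?u b) \<in> intring v" using x un that by (simp add: integral_mats_def)
        then show ?thesis using ci[OF n1C un[OF that(1)] un[OF that(2)]] n1(2) wu by simp
      qed
      then have n1i: "n1 \<in> integral_mats n v" by (simp add: integral_mats_def)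
      obtain n1' where n1': "n1' \<in> unip n J' \<inter> integral_mats n v" "z * n1 = n1' * z"
        using z n1(1) n1i by (auto simp: Zplus_def)
      have n1'G: "n1' \<in> GLn n" using n1' by (simp add: unip_def)
      have n1'C: "n1' \<in> carrier_mat n n" by (rule GLn_carrier[OF n1'G])
      let ?x' = "conj n ?u n1'"
      have x'C: "?x' \<in> carrier_mat n n" using n1'C by simp
      have xC: "x \<in> carrier_mat n n" using n1(2) n1C by simp
      have eq: "?Z * x = ?x' * ?Z"
        unfolding n1(2) conj_mult[OF up zC n1C, symmetric] conj_mult[OF up n1'C zC, symmetric] n1'(2) ..
      have x'i: "?x' \<in> integral_mats n v"
        using n1' wn by (auto simp: integral_mats_def ci[OF n1'C])
      have "\<forall>i<n. \<forall>j<n. \<not> blk J i j \<longrightarrow> ?x' $$ (i,j) = 0"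
      proof (intro allI impI)
        fix i j assume i: "i < n" and j: "j < n" and b: "\<not> blk J i j"
        have "x $$ (i,j) = 0" using x i j b by (simp add: levi_def pattern_grp_def)
        then have "(?Z * x) $$ (i,j) = 0" using diag_mult_left[OF ZC Zd xC i j] by simp
        then have "?x' $$ (i,j) * ?Z $$ (j,j) = 0" using diag_mult_right[OF ZC Zd x'C i j] eq by simp
        then show "?x' $$ (i,j) = 0" using Znz[OF j] by simp
      qed
      then have "?x' \<in> levi n J" using conj_GLn[OF up n1'G] by (simp add: levi_def pattern_grp_def)
      then show ?thesis using eq x'i n1' by blast
    qed
    have A2: "\<exists>x'\<in>(levi n J \<inter> conj n ?u ` ounip n J') \<inter> level1_mats n v. x * ?Z = ?Z * x'"
      if x: "x \<in> (levi n J \<inter> conj n ?u ` ounip n J') \<inter> level1_mats n v" for x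
    proof -
      obtain n1 where n1: "n1 \<in> ounip n J'" "x = conj n ?u n1" using x by auto
      have n1G: "n1 \<in> GLn n" using n1 by (simp add: ounip_def)
      have n1C: "n1 \<in> carrier_mat n n" by (rule GLn_carrier[OF n1G])
      have "n1 $$ (a,b) - (1\<^sub>m n) $$ (a,b) \<in> maxideal v" if "a < n" "b < n" for a b
      proof -
        have "x $$ (?u a, ?u b) - (1\<^sub>m n) $$ (?u a, ?u b) \<in> maxideal v" using x un that by (simp add: level1_mats_def)
        moreover have "(1\<^sub>m n :: 'k mat) $$ (?u a, ?u b) = (1\<^sub>m n :: 'k mat) $$ (a, b)"
          using un that uinj by simp
        ultimately show ?thesis using ci[OF n1C un[OF that(1)] un[OF that(2)]] n1(2) wu by simp
      qed
      then have n1i: "n1 \<in> level1_mats n v" by (simp add: level1_mats_def)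
      obtain n1' where n1': "n1' \<in> ounip n J' \<inter> level1_mats n v" "n1 * z = z * n1'"
        using z n1(1) n1i by (auto simp: Zplus_def)
      have n1'G: "n1' \<in> GLn n" using n1' by (simp add: ounip_def)
      have n1'C: "n1' \<in> carrier_mat n n" by (rule GLn_carrier[OF n1'G])
      let ?x' = "conj n ?u n1'"
      have x'C: "?x' \<in> carrier_mat n n" using n1'C by simp
      have xC: "x \<in> carrier_mat n n" using n1(2) n1C by simp
      have eq: "x * ?Z = ?Z * ?x'"
        unfolding n1(2) conj_mult[OF up n1C zC, symmetric] conj_mult[OF up zC n1'C, symmetric] n1'(2) ..
      have x'i: "?x' \<in> level1_mats n v"
      proof -
        have "?x' $$ (i,j) - (1\<^sub>m n) $$ (i,j) \<in> maxideal v" if "i < n" "j < n" for i j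
        proof -
          have "n1' $$ (w i, w j) - (1\<^sub>m n) $$ (w i, w j) \<in> maxideal v"
            using n1' wn that by (simp add: level1_mats_def)
          moreover have "(1\<^sub>m n :: 'k mat) $$ (w i, w j) = (1\<^sub>m n :: 'k mat) $$ (i, j)"
            using wn that winj by simp
          ultimately show ?thesis using ci[OF n1'C that] by simp
        qed
        then show ?thesis by (simp add: level1_mats_def)
      qed
      have "\<forall>i<n. \<forall>j<n. \<not> blk J i j \<longrightarrow> ?x' $$ (i,j) = 0"
      proof (intro allI impI)
        fix i j assume i: "i < n" and j: "j < n" and b: "\<not> blk J i j"
        have "x $$ (i,j) = 0" using x i j b by (simp add: levi_def pattern_grp_def)
        then have "(x * ?Z) $$ (i,j) = 0" using diag_mult_right[OF ZC Zd xC i j] by simp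
        then have "?Z $$ (i,i) * ?x' $$ (i,j) = 0" using diag_mult_left[OF ZC Zd x'C i j] eq by simp
        then show "?x' $$ (i,j) = 0" using Znz[OF i] by simp
      qed
      then have "?x' \<in> levi n J" using conj_GLn[OF up n1'G] by (simp add: levi_def pattern_grp_def)
      then show ?thesis using eq x'i n1' by blast
    qed
    show ?thesis unfolding Zplus_def using Zcent A1 A2 by blast
  qed
  show ?thesis using P1 P2 P3 by blast
qed


end
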